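(* Let $p>2$ be a prime and $d>0$ an integer with $d\not\equiv 0\pmod p$, and suppose $-1\in QR_p$. Let $N_p$ be the number of solutions $(x,y)\in\mathbb{Z}_p\times\mathbb{Z}_p$ of $$y^2\equiv x^3-d^2x \pmod p,$$ and let $n_1$ be the number of distinct fourth powers $u=y^4\in\mathbb{Z}_p^*$ ($y\in\mathbb{Z}_p^*$) such that $u-1\in QR_p$. Then $$N_p=8n_1+7 \text{ if } d\in QR_p,\qquad N_p=-8n_1+2p-7 \text{ if } d\in QNR_p .$$
   Context: $\mathbb{Z}_p$ denotes the integers modulo $p$, $\mathbb{Z}_p^*=\{1,\dots,p-1\}$. $QR_p=\{x\in\mathbb{Z}_p^*: \exists y\in\mathbb{Z}_p^*,\ y^2\equiv x \pmod p\}$ is the set of nonzero quadratic residues modulo $p$ and $QNR_p=\mathbb{Z}_p^*\setminus QR_p$ the set of quadratic nonresidues; $d$ is regarded as an element of $\mathbb{Z}_p^*$ via reduction mod $p$. *)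

theory Defs
  imports "HOL-Number_Theory.Number_Theory"
begin

text \<open>Z_p^* = {1..p-1}; residues are represented by integers in {0..p-1}.\<close>

definition QR :: "int \<Rightarrow> int set" where
  "QR p = {x \<in> {1..p-1}. \<exists>y \<in> {1..p-1}. [y^2 = x] (mod p)}"

definition QNR :: "int \<Rightarrow> int set" where
  "QNR p = {1..p-1} - QR p"

definition Np :: "int \<Rightarrow> int \<Rightarrow> nat" where
  "Np p d = card {(x, y). x \<in> {0..p-1} \<and> y \<in> {0..p-1} \<and> [y^2 = x^3 - d^2 * x] (mod p)}"

definition n1 :: "int \<Rightarrow> nat" where
  "n1 p = card {u. (\<exists>y \<in> {1..p-1}. u = (y^4) mod p) \<and> (u - 1) mod p \<in> QR p}"

end

theory Submission
  imports Defs
begin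


context
  fixes p :: int
  assumes pp: "prime p" and p2: "p > 2"
begin

lemma L_vals: "Legendre a p \<in> {-1,0,1}"
  by (auto simp: Legendre_def)

lemma L_small: "x \<in> {-1,0,1::int} \<Longrightarrow> y \<in> {-1,0,1} \<Longrightarrow> [x = y] (mod p) \<Longrightarrow> x = y"
proof -
  assume x: "x \<in> {-1,0,1::int}" and y: "y \<in> {-1,0,1}" and c: "[x = y] (mod p)"
  then have "p dvd x - y" by (simp add: cong_iff_dvd_diff)
  moreover have "\<bar>x - y\<bar> < p" using x y p2 by auto
  show "x = y"
  proof (rule ccontr)
    assume "x \<noteq> y"
    then have "\<bar>p\<bar> \<le> \<bar>x - y\<bar>" using dvd_imp_le_int[of "x - y" p] \<open>p dvd x - y\<close> by simp
    then show False using \<open>\<bar>x - y\<bar> < p\<close> by linarith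
  qed
qed

lemma euler': "[Legendre a p = a ^ nat ((p - 1) div 2)] (mod p)"
proof -
  have np: "prime (nat p)" using pp by simp
  have "2 < nat p" using p2 by simp
  from euler_criterion[OF np this, of a]
  have "[Legendre a (int (nat p)) = a ^ ((nat p - 1) div 2)] (mod int (nat p))" .
  moreover have "int (nat p) = p" using p2 by simp
  moreover have "(nat p - 1) div 2 = nat ((p - 1) div 2)" using p2 by (simp add: nat_div_distrib nat_diff_distrib)
  ultimately show ?thesis by simp
qed

lemma L_cong: "[a = b] (mod p) \<Longrightarrow> Legendre a p = Legendre b p"
proof -
  assume c: "[a = b] (mod p)"
  have "[Legendre a p = a ^ nat ((p - 1) div 2)] (mod p)"
    using euler' by simp
  moreover have "[a ^ nat ((p - 1) div 2) = b ^ nat ((p - 1) div 2)] (mod p)"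
    using c by (rule cong_pow)
  moreover have "[Legendre b p = b ^ nat ((p - 1) div 2)] (mod p)"
    using euler' by simp
  ultimately have "[Legendre a p = Legendre b p] (mod p)"
    by (meson cong_sym cong_trans)
  then show ?thesis using L_small L_vals by blast
qed

lemma L_mult: "Legendre (a * b) p = Legendre a p * Legendre b p"
proof -
  let ?k = "nat ((p - 1) div 2)"
  have "[Legendre (a*b) p = (a*b) ^ ?k] (mod p)"
    using euler' by simp
  moreover have "[Legendre a p * Legendre b p = a ^ ?k * b ^ ?k] (mod p)"
    using euler' cong_mult by blast
  ultimately have "[Legendre (a*b) p = Legendre a p * Legendre b p] (mod p)"
    by (metis cong_sym cong_trans power_mult_distrib)
  moreover have "Legendre a p * Legendre b p \<in> {-1,0,1}" using L_vals[of a] L_vals[of b] by auto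
  ultimately show ?thesis using L_small L_vals by blast
qed

lemma root2:
  assumes "[t^2 = w^2] (mod p)"
  shows "[t = w] (mod p) \<or> [t = -w] (mod p)"
proof -
  have "p dvd (t - w) * (t + w)" using assms
    by (simp add: cong_iff_dvd_diff power2_eq_square algebra_simps)
  then have "p dvd t - w \<or> p dvd t + w" using pp prime_dvd_mult_iff by blast
  then show ?thesis by (auto simp: cong_iff_dvd_diff)
qed

lemma L_QR: "a mod p \<in> QR p \<longleftrightarrow> Legendre a p = 1"
proof
  assume "a mod p \<in> QR p"
  then obtain y where y: "a mod p \<in> {1..p-1}" "[y^2 = a mod p] (mod p)" unfolding QR_def by auto
  then have "\<not> [a = 0] (mod p)" by (auto simp: cong_def)
  moreover have "QuadRes p a" using y(2) unfolding QuadRes_def cong_def by auto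
  ultimately show "Legendre a p = 1" by (simp add: Legendre_def)
next
  assume "Legendre a p = 1"
  then have a0: "\<not> [a = 0] (mod p)" and "QuadRes p a" by (auto simp: Legendre_def split: if_splits)
  then obtain y where y: "[y^2 = a] (mod p)" unfolding QuadRes_def by auto
  have ym: "[(y mod p)^2 = a] (mod p)" using y by (simp add: cong_def power_mod)
  have yn: "y mod p \<noteq> 0" using ym a0 by (auto simp: cong_def)
  have y1: "1 \<le> y mod p" using yn pos_mod_sign[of p y] p2 by linarith
  have y2: "y mod p \<le> p - 1" using pos_mod_bound[of p y] p2 by linarith
  have "a mod p \<noteq> 0" using a0 by (auto simp: cong_def)
  moreover have "0 \<le> a mod p" "a mod p < p" using p2 by auto
  ultimately have "a mod p \<in> {1..p-1}" by auto
  moreover have "y mod p \<in> {1..p-1}" using y1 y2 by auto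
  ultimately
  show "a mod p \<in> QR p" unfolding QR_def using ym
    by (auto simp: cong_def intro!: bexI[of _ "y mod p"])
qed

end



lemma card_fibers:
  assumes "finite A" "finite B" "\<And>y. y \<in> A \<Longrightarrow> \<exists>!x. x \<in> B \<and> R x y"
  shows "card A = (\<Sum>x\<in>B. card {y\<in>A. R x y})"
proof -
  have "A = (\<Union>x\<in>B. {y\<in>A. R x y})" using assms(3) by blast
  then have "card A = card (\<Union>x\<in>B. {y\<in>A. R x y})" by simp
  also have "\<dots> = (\<Sum>x\<in>B. card {y\<in>A. R x y})"
    by (rule card_UN_disjoint) (use assms in auto)
  finally show ?thesis .
qed

context
  fixes p :: int
  assumes pp: "prime p" and p2: "p > 2"
begin

lemmas Lc_B = L_cong[OF pp p2] and Lm_B = L_mult[OF pp p2] and r2_B = root2[OF pp p2]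
  and LQ_B = L_QR[OF pp p2]

lemma mod_eq_range: "x \<in> {0..p-1} \<Longrightarrow> [x = y] (mod p) \<Longrightarrow> x = y mod p"
  by (auto simp: cong_def)

lemma neg_mod: "r \<in> {1..p-1} \<Longrightarrow> (-r) mod p = p - r"
  by (auto simp: zmod_zminus1_eq_if)

lemma fib: "int (card {y\<in>{0..p-1}. [y^2 = a] (mod p)}) = 1 + Legendre a p"
proof (cases "[a = 0] (mod p)")
  case True
  have "{y\<in>{0..p-1}. [y^2 = a] (mod p)} = {0}"
  proof safe
    fix y assume y: "y \<in> {0..p-1}" "[y^2 = a] (mod p)"
    then have "[y^2 = 0^2] (mod p)" using True cong_trans by simp
    then have "[y = 0] (mod p) \<or> [y = -0] (mod p)" by (rule r2_B)
    then show "y = 0" using mod_eq_range[OF y(1), of 0] by auto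
  next
    show "0 \<in> {0..p-1}" using p2 by simp
    show "[0^2 = a] (mod p)" using True by (simp add: cong_sym)
  qed
  then show ?thesis using True by (simp add: Legendre_def)
next
  case a0: False
  show ?thesis
  proof (cases "QuadRes p a")
    case False
    then have "{y\<in>{0..p-1}. [y^2 = a] (mod p)} = {}" unfolding QuadRes_def by auto
    then show ?thesis using False a0 by (simp only: Legendre_def) simp
  next
    case True
    then obtain y0 where y0: "[y0^2 = a] (mod p)" unfolding QuadRes_def by auto
    define r where "r = y0 mod p"
    have ra: "[r^2 = a] (mod p)" using y0 unfolding r_def by (simp add: cong_def power_mod)
    have "r \<noteq> 0" using ra a0 by (auto simp: cong_def)
    moreover have "0 \<le> r" "r < p" using p2 unfolding r_def by auto
    ultimately have rr: "r \<in> {1..p-1}" by auto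
    have "{y\<in>{0..p-1}. [y^2 = a] (mod p)} = {r, p - r}"
    proof safe
      fix y assume y: "y \<in> {0..p-1}" "[y^2 = a] (mod p)" "y \<noteq> r"
      then have "[y^2 = r^2] (mod p)" using ra by (meson cong_sym cong_trans)
      then have "[y = r] (mod p) \<or> [y = -r] (mod p)" by (rule r2_B)
      then show "y = p - r" using mod_eq_range[OF y(1), of r] mod_eq_range[OF y(1), of "-r"] y(3) rr neg_mod[OF rr]
        by (auto simp: mod_pos_pos_trivial)
    next
      show "r \<in> {0..p-1}" "p - r \<in> {0..p-1}" "[r^2 = a] (mod p)" using rr ra by auto
      have "[(p - r)^2 = r^2] (mod p)"
        by (simp add: cong_iff_dvd_diff power2_eq_square algebra_simps)
      then show "[(p - r)^2 = a] (mod p)" using ra cong_trans by blast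
    qed
    moreover have "r \<noteq> p - r"
    proof
      assume "r = p - r" then have "p = 2 * r" by simp
      then have "2 dvd p" by simp
      then show False using pp p2 prime_odd_int by auto
    qed
    ultimately show ?thesis using True a0 by (simp add: Legendre_def)
  qed
qed

end



context
  fixes p :: int
  assumes pp: "prime p" and p2: "p > 2"
begin

lemmas Lc_C = L_cong[OF pp p2] and Lm_C = L_mult[OF pp p2] and r2_C = root2[OF pp p2]
  and LQ_C = L_QR[OF pp p2] and fb_C = fib[OF pp p2] and mer_C = mod_eq_range[OF pp p2]
  and nm_C = neg_mod[OF pp p2]

lemma sumL0: "(\<Sum>a\<in>{0..p-1}. Legendre a p) = 0"
proof -
  have "card {0..p-1} = (\<Sum>a\<in>{0..p-1}. card {y\<in>{0..p-1}. [y^2 = a] (mod p)})"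
  proof (rule card_fibers)
    fix y assume "y \<in> {0..p-1}"
    show "\<exists>!a. a \<in> {0..p-1} \<and> [y^2 = a] (mod p)"
    proof (rule ex1I[of _ "y^2 mod p"])
      show "y^2 mod p \<in> {0..p-1} \<and> [y^2 = y^2 mod p] (mod p)" using p2 by (auto simp: cong_def)
      fix a assume "a \<in> {0..p-1} \<and> [y^2 = a] (mod p)"
      then show "a = y^2 mod p" using mer_C[of a "y^2"] by (auto simp: cong_sym_eq)
    qed
  qed auto
  then have "int (card {0..p-1}) = (\<Sum>a\<in>{0..p-1}. 1 + Legendre a p)"
    using fb_C by (simp add: of_nat_sum)
  also have "\<dots> = int (card {0..p-1}) + (\<Sum>a\<in>{0..p-1}. Legendre a p)"
    by (simp add: sum.distrib)
  finally show ?thesis by simp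
qed

lemma coprime_nz: "s \<in> {1..p-1} \<Longrightarrow> coprime s p"
proof -
  assume s: "s \<in> {1..p-1}"
  have "\<not> p dvd s" using s zdvd_imp_le by fastforce
  then show "coprime s p" using prime_imp_coprime[OF pp] coprime_commute by blast
qed

lemma sq_helper:
  assumes "[x = X] (mod p)" "[y = Y] (mod p)" "[X^2 - Y^2 = 1] (mod p)"
  shows "[y^2 = x^2 - 1] (mod p)"
proof -
  have "[x^2 - y^2 = X^2 - Y^2] (mod p)" using assms by (intro cong_diff cong_pow)
  then have "[x^2 - y^2 = 1] (mod p)" using assms(3) cong_trans by blast
  then show ?thesis by (simp add: cong_iff_dvd_diff dvd_diff_commute algebra_simps)
qed

lemma sumLsq: "(\<Sum>x\<in>{0..p-1}. Legendre (x^2 - 1) p) = -1"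
proof -
  define S where "S = (SIGMA x:{0..p-1}. {y\<in>{0..p-1}. [y^2 = x^2 - 1] (mod p)})"
  have "card S = (\<Sum>x\<in>{0..p-1}. card {y\<in>{0..p-1}. [y^2 = x^2 - 1] (mod p)})"
    unfolding S_def by (rule card_SigmaI) (auto intro: finite_subset[of _ "{0..p-1}"])
  then have "int (card S) = (\<Sum>x\<in>{0..p-1}. 1 + Legendre (x^2 - 1) p)"
    using fb_C by (simp only: of_nat_sum)
  also have "\<dots> = p + (\<Sum>x\<in>{0..p-1}. Legendre (x^2 - 1) p)"
    using p2 by (simp add: sum.distrib)
  finally have e1: "int (card S) = p + (\<Sum>x\<in>{0..p-1}. Legendre (x^2 - 1) p)" .
  define g where "g = (\<lambda>(x::int, y::int). (x - y) mod p)"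
  have key: "[(x - y) * (x + y) = 1] (mod p)" if "(x, y) \<in> S" for x y
  proof -
    have "[y^2 = x^2 - 1] (mod p)" using that unfolding S_def by auto
    then have "p dvd (x^2 - 1) - y^2" by (simp add: cong_iff_dvd_diff dvd_diff_commute)
    then show ?thesis by (simp add: cong_iff_dvd_diff power2_eq_square algebra_simps)
  qed
  have inj: "inj_on g S"
  proof (rule inj_onI)
    fix a b assume a: "a \<in> S" and b: "b \<in> S" and gab: "g a = g b"
    obtain x y where ab: "a = (x, y)" by (cases a)
    obtain x' y' where bb: "b = (x', y')" by (cases b)
    have k1: "[(x - y) * (x + y) = 1] (mod p)" using key a ab by blast
    have k2: "[(x' - y') * (x' + y') = 1] (mod p)" using key b bb by blast
    have ss: "[x - y = x' - y'] (mod p)" using gab ab bb unfolding g_def by (simp add: cong_def)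
    have cop: "coprime (x - y) p" using k1 coprime_iff_invertible_int by blast
    have "[(x' - y') * (x' + y') = (x - y) * (x' + y')] (mod p)"
      using ss by (simp add: cong_sym cong_scalar_right)
    then have "[(x - y) * (x + y) = (x - y) * (x' + y')] (mod p)"
      using k1 k2 by (meson cong_sym cong_trans)
    then have pl: "[x + y = x' + y'] (mod p)"
      using cop cong_mult_rcancel by (metis mult.commute)
    have "[(x - y) + (x + y) = (x' - y') + (x' + y')] (mod p)" using ss pl by (rule cong_add)
    then have "[x * 2 = x' * 2] (mod p)" by (simp add: algebra_simps)
    moreover have "coprime 2 p" using pp p2 prime_odd_int
      by (metis coprime_commute coprime_right_2_iff_odd)
    ultimately have xx: "[x = x'] (mod p)" using cong_mult_rcancel by blast
    then have "[x - (x - y) = x' - (x' - y')] (mod p)" using ss by (rule cong_diff)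
    then have "[y = y'] (mod p)" by simp
    moreover have "x \<in> {0..p-1}" "x' \<in> {0..p-1}" "y \<in> {0..p-1}" "y' \<in> {0..p-1}"
      using a b ab bb unfolding S_def by auto
    ultimately have "x = x'" "y = y'" using xx by (auto simp: cong_def mod_pos_pos_trivial)
    then show "a = b" using ab bb by simp
  qed
  have img: "g ` S = {1..p-1}"
  proof safe
    fix x y assume xy: "(x, y) \<in> S"
    have "g (x, y) \<noteq> 0"
    proof
      assume "g (x, y) = 0"
      then have "[x - y = 0] (mod p)" unfolding g_def by (simp add: cong_def)
      then have "[(x - y) * (x + y) = 0 * (x + y)] (mod p)" by (rule cong_scalar_right)
      then have "[1 = 0] (mod p)" using key[OF xy] by (metis cong_sym cong_trans mult_zero_left)
      then show False using p2 by (auto simp: cong_def)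
    qed
    moreover have "0 \<le> g (x, y)" "g (x, y) < p" using p2 unfolding g_def by auto
    ultimately show "g (x, y) \<in> {1..p-1}" by auto
  next
    fix s assume s: "s \<in> {1..p-1}"
    obtain t where t: "[s * t = 1] (mod p)" using coprime_nz[OF s] coprime_iff_invertible_int by blast
    have "coprime 2 p" using pp p2 prime_odd_int
      by (metis coprime_commute coprime_right_2_iff_odd)
    then obtain h where h: "[2 * h = 1] (mod p)" using coprime_iff_invertible_int by blast
    define x where "x = (h * (s + t)) mod p"
    define y where "y = (h * (t - s)) mod p"
    have cx: "[x = h * (s + t)] (mod p)" unfolding x_def by (simp add: cong_def)
    have cy: "[y = h * (t - s)] (mod p)" unfolding y_def by (simp add: cong_def)
    have "(h * (s + t))^2 - (h * (t - s))^2 = (2 * h)^2 * (s * t)"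
      by (simp add: power2_eq_square algebra_simps)
    moreover have "[(2 * h)^2 * (s * t) = 1^2 * 1] (mod p)" using h t by (intro cong_mult cong_pow)
    ultimately have "[(h * (s + t))^2 - (h * (t - s))^2 = 1] (mod p)" by simp
    then have eq: "[y^2 = x^2 - 1] (mod p)" using sq_helper cx cy by blast
    have "x \<in> {0..p-1}" "y \<in> {0..p-1}" unfolding x_def y_def using p2 by auto
    then have inS: "(x, y) \<in> S" unfolding S_def using eq by auto
    have "[x - y = h * (s + t) - h * (t - s)] (mod p)" using cx cy by (rule cong_diff)
    moreover have "h * (s + t) - h * (t - s) = (2 * h) * s" by (simp add: algebra_simps)
    moreover have "[(2 * h) * s = 1 * s] (mod p)" using h by (rule cong_scalar_right)
    ultimately have "[x - y = s] (mod p)" by (metis cong_trans mult_1)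
    then have "g (x, y) = s" unfolding g_def using s by (simp add: cong_def)
    then show "s \<in> g ` S" using inS by (metis image_eqI)
  qed
  have "card S = card {1..p-1}" using card_image[OF inj] img by simp
  then have "int (card S) = p - 1" using p2 by simp
  with e1 show ?thesis by simp
qed

end



context
  fixes p :: int
  assumes pp: "prime p" and p2: "p > 2" and m1: "(-1) mod p \<in> QR p"
begin

lemmas Lc_D = L_cong[OF pp p2] and Lm_D = L_mult[OF pp p2] and r2_D = root2[OF pp p2]
  and LQ_D = L_QR[OF pp p2] and fb_D = fib[OF pp p2] and mer_D = mod_eq_range[OF pp p2]
  and nm_D = neg_mod[OF pp p2] and cnz_D = coprime_nz[OF pp p2]

lemma Lm1: "Legendre (-1) p = 1" using m1 LQ_D by blast

lemma L0: "Legendre 0 p = 0" by (simp add: Legendre_def)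

lemma L1: "Legendre 1 p = 1"
proof -
  have "\<not> [1 = 0] (mod p)" using p2 by (auto simp: cong_def)
  moreover have "QuadRes p 1" unfolding QuadRes_def by (rule exI[of _ 1]) simp
  ultimately show ?thesis by (simp add: Legendre_def)
qed

lemma Lsq: "y \<in> {1..p-1} \<Longrightarrow> Legendre (y^2) p = 1"
proof -
  assume y: "y \<in> {1..p-1}"
  have "\<not> [y^2 = 0] (mod p)"
  proof
    assume "[y^2 = 0] (mod p)"
    then have "[y^2 = 0^2] (mod p)" by simp
    then have "[y = 0] (mod p)" using r2_D by fastforce
    then show False using y by (auto simp: cong_def)
  qed
  moreover have "QuadRes p (y^2)" unfolding QuadRes_def using cong_refl by blast
  ultimately show ?thesis by (simp add: Legendre_def)
qed

definition U where "U = {u. (\<exists>y \<in> {1..p-1}. u = (y^4) mod p) \<and> (u - 1) mod p \<in> QR p}"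

definition X where "X = {t\<in>{0..p-1}. Legendre t p = 1 \<and> Legendre (t^2 - 1) p = 1}"

lemma cardX: "card X = 2 * card U"
proof -
  have finU: "finite U"
    by (rule finite_subset[of _ "{0..p-1}"]) (use p2 in \<open>auto simp: U_def\<close>)
  have "card X = (\<Sum>u\<in>U. card {t\<in>X. t^2 mod p = u})"
  proof (rule card_fibers)
    show "finite X" unfolding X_def by (rule finite_subset[of _ "{0..p-1}"]) auto
    show "finite U" by (rule finU)
    fix t assume t: "t \<in> X"
    have "t^2 mod p \<in> U"
    proof -
      have Lt: "Legendre t p = 1" and Lt2: "Legendre (t^2 - 1) p = 1" and tr: "t \<in> {0..p-1}"
        using t unfolding X_def by auto
      then have "QuadRes p t" and t0: "\<not> [t = 0] (mod p)" by (auto simp: Legendre_def split: if_splits)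
      then obtain s where s: "[s^2 = t] (mod p)" unfolding QuadRes_def by auto
      define s' where "s' = s mod p"
      have s's: "[s'^2 = t] (mod p)" using s unfolding s'_def by (simp add: cong_def power_mod)
      have "s' \<noteq> 0" using s's t0 by (auto simp: cong_def)
      moreover have "0 \<le> s'" "s' < p" using p2 unfolding s'_def by auto
      ultimately have s'r: "s' \<in> {1..p-1}" by auto
      have "[(s'^2)^2 = t^2] (mod p)" using s's by (rule cong_pow)
      then have "t^2 mod p = s'^4 mod p" by (simp add: cong_def power_mult[symmetric])
      moreover have "Legendre (t^2 mod p - 1) p = 1"
        using Lt2 Lc_D[of "t^2 mod p - 1" "t^2 - 1"] by (simp add: cong_def mod_diff_left_eq)
      then have "(t^2 mod p - 1) mod p \<in> QR p" using LQ_D by blast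
      ultimately show ?thesis unfolding U_def using s'r by auto
    qed
    then show "\<exists>!u. u \<in> U \<and> t^2 mod p = u" by auto
  qed
  also have "\<dots> = (\<Sum>u\<in>U. 2)"
  proof (rule sum.cong)
    fix u assume u: "u \<in> U"
    then obtain y where y: "y \<in> {1..p-1}" "u = y^4 mod p" and uq: "(u - 1) mod p \<in> QR p"
      unfolding U_def by auto
    have Lu: "Legendre (u - 1) p = 1" using uq LQ_D by blast
    define r where "r = y^2 mod p"
    have Lr: "Legendre r p = 1" using Lsq[OF y(1)] Lc_D[of r "y^2"] unfolding r_def by (simp add: cong_def)
    then have "r \<noteq> 0" using L0 by auto
    moreover have "0 \<le> r" "r < p" using p2 unfolding r_def by auto
    ultimately have rr: "r \<in> {1..p-1}" by auto
    have ru: "[r^2 = u] (mod p)" unfolding r_def y(2)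
      by (simp add: cong_def power_mod power_mult[symmetric])
    have pr2: "[(p - r)^2 = r^2] (mod p)"
      by (simp add: cong_iff_dvd_diff power2_eq_square algebra_simps)
    have Lpr: "Legendre (p - r) p = 1"
    proof -
      have "Legendre (p - r) p = Legendre ((-1) * r) p" by (rule Lc_D) (simp add: cong_iff_dvd_diff)
      moreover have "Legendre (-r) p = Legendre (-1) p * Legendre r p" using Lm_D[of "-1" r] by simp
      ultimately show ?thesis using Lm1 Lr by simp
    qed
    have Lr2: "Legendre (r^2 - 1) p = 1"
      using Lu Lc_D[of "r^2 - 1" "u - 1"] ru by (simp add: cong_diff)
    have Lpr2: "Legendre ((p - r)^2 - 1) p = 1"
    proof -
      have "[(p - r)^2 = u] (mod p)" using pr2 ru by (rule cong_trans)
      then have "[(p - r)^2 - 1 = u - 1] (mod p)" by (simp add: cong_diff)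
      then show ?thesis using Lu Lc_D by simp
    qed
    have umod: "u mod p = u" unfolding y(2) by simp
    have "{t\<in>X. t^2 mod p = u} = {r, p - r}"
    proof (intro subset_antisym subsetI)
      fix t assume "t \<in> {t\<in>X. t^2 mod p = u}"
      then have tX: "t \<in> X" and tu: "t^2 mod p = u" by auto
      have tr: "t \<in> {0..p-1}" using tX unfolding X_def by auto
      have "[t^2 = r^2] (mod p)" using tu ru umod by (simp add: cong_def)
      then have "[t = r] (mod p) \<or> [t = -r] (mod p)" by (rule r2_D)
      then have "t = r \<or> t = p - r" using mer_D[OF tr, of r] mer_D[OF tr, of "-r"] rr nm_D[OF rr]
        by (auto simp: mod_pos_pos_trivial)
      then show "t \<in> {r, p - r}" by auto
    next
      fix t assume "t \<in> {r, p - r}"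
      moreover have "r \<in> X" unfolding X_def using rr Lr Lr2 by auto
      moreover have "p - r \<in> X" unfolding X_def using rr Lpr Lpr2 by auto
      moreover have "r^2 mod p = u" using ru umod by (simp add: cong_def)
      moreover have "[(p - r)^2 = u] (mod p)" using pr2 ru by (rule cong_trans)
      then have "(p - r)^2 mod p = u" using umod by (simp add: cong_def)
      ultimately show "t \<in> {t\<in>X. t^2 mod p = u}" by auto
    qed
    moreover have "r \<noteq> p - r"
    proof
      assume "r = p - r" then have "p = 2 * r" by simp
      then have "2 dvd p" by simp
      then show False using pp p2 prime_odd_int by auto
    qed
    ultimately show "card {t\<in>X. t^2 mod p = u} = 2" by simp
  qed simp
  finally show ?thesis by simp
qed

lemma n1U: "n1 p = card U" by (simp add: n1_def U_def)

lemma split3: "(\<Sum>t\<in>{0..p-1}. f t) = f 0 + f 1 + f (p-1) + (\<Sum>t\<in>{2..p-2}. f t)"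
proof -
  have "{0..p-1} = insert 0 (insert 1 (insert (p-1) {2..p-2}))" using p2 by auto
  moreover have "p - 1 \<notin> {2..p-2}" "1 \<notin> insert (p-1) {2..p-2}" "0 \<notin> insert 1 (insert (p-1) {2..p-2})"
    using p2 by auto
  ultimately show ?thesis by (simp add: algebra_simps)
qed

lemma S1: "(\<Sum>t\<in>{0..p-1}. Legendre (t^3 - t) p) = 8 * int (card U) + 7 - p"
proof -
  define T where "T = {2..p-2}"
  have Lpm1: "Legendre (p - 1) p = 1" using Lm1 Lc_D[of "p-1" "-1"] by (simp add: cong_iff_dvd_diff)
  have Lsq0: "Legendre ((p - 1)^2 - 1) p = 0"
  proof -
    have "(p - 1)^2 - 1 = p * (p - 2)" by (simp add: power2_eq_square algebra_simps)
    then show ?thesis by (simp add: Legendre_def cong_0_iff)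
  qed
  have f: "Legendre (t^3 - t) p = Legendre t p * Legendre (t^2 - 1) p" for t
  proof -
    have "t^3 - t = t * (t^2 - 1)" by (simp add: power2_eq_square power3_eq_cube algebra_simps)
    then show ?thesis using Lm_D by simp
  qed
  have nz: "Legendre t p \<in> {-1,1} \<and> Legendre (t^2 - 1) p \<in> {-1,1}" if t: "t \<in> T" for t
  proof -
    have "\<not> [t = 0] (mod p)" using t p2 unfolding T_def by (auto simp: cong_def)
    moreover have "\<not> [t^2 - 1 = 0] (mod p)"
    proof
      assume "[t^2 - 1 = 0] (mod p)"
      then have "[t^2 = 1^2] (mod p)" by (simp add: cong_iff_dvd_diff)
      then have "[t = 1] (mod p) \<or> [t = -1] (mod p)" by (rule r2_D)
      moreover have "t \<in> {0..p-1}" using t unfolding T_def by auto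
      ultimately have "t = 1 mod p \<or> t = (-1) mod p" using mer_D by blast
      moreover have "(-1) mod p = p - 1" using nm_D[of 1] p2 by simp
      ultimately show False using t p2 unfolding T_def by auto
    qed
    ultimately show ?thesis by (auto simp: Legendre_def)
  qed
  have ident: "Legendre t p * Legendre (t^2 - 1) p
      = 4 * (if Legendre t p = 1 \<and> Legendre (t^2 - 1) p = 1 then 1 else 0)
        - Legendre t p - Legendre (t^2 - 1) p - 1" if "t \<in> T" for t
    using nz[OF that] by auto
  have sumI: "(\<Sum>t\<in>T. (if Legendre t p = 1 \<and> Legendre (t^2 - 1) p = 1 then 1 else 0::int)) = int (card X)"
  proof -
    have "X = {t\<in>T. Legendre t p = 1 \<and> Legendre (t^2 - 1) p = 1}"
    proof (intro subset_antisym subsetI)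
      fix t assume "t \<in> X"
      then have t: "t \<in> {0..p-1}" "Legendre t p = 1" "Legendre (t^2 - 1) p = 1" unfolding X_def by auto
      have "t \<noteq> 0" using t(2) L0 by auto
      moreover have "t \<noteq> 1" using t(3) L0 by auto
      moreover have "t \<noteq> p - 1" using t(3) Lsq0 by auto
      ultimately have "t \<in> T" using t(1) unfolding T_def by auto
      then show "t \<in> {t\<in>T. Legendre t p = 1 \<and> Legendre (t^2 - 1) p = 1}" using t by auto
    next
      fix t assume "t \<in> {t\<in>T. Legendre t p = 1 \<and> Legendre (t^2 - 1) p = 1}"
      then show "t \<in> X" unfolding X_def T_def by auto
    qed
    moreover have "{t\<in>T. Legendre t p = 1 \<and> Legendre (t^2 - 1) p = 1}
        = T \<inter> {t. Legendre t p = 1 \<and> Legendre (t^2 - 1) p = 1}" by auto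
    moreover have "finite T" unfolding T_def by simp
    ultimately show ?thesis by (simp only: sum.If_cases) simp
  qed
  have sT1: "(\<Sum>t\<in>T. Legendre t p) = -2"
    using sumL0[OF pp p2] split3[of "\<lambda>t. Legendre t p"] L0 L1 Lpm1 unfolding T_def by simp
  have sT2: "(\<Sum>t\<in>T. Legendre (t^2 - 1) p) = -2"
    using sumLsq[OF pp p2] split3[of "\<lambda>t. Legendre (t^2 - 1) p"] L0 Lm1 Lsq0 unfolding T_def by simp
  have cT: "int (card T) = p - 3" unfolding T_def using p2 by simp
  have "(\<Sum>t\<in>{0..p-1}. Legendre (t^3 - t) p) = (\<Sum>t\<in>T. Legendre t p * Legendre (t^2 - 1) p)"
    using split3[of "\<lambda>t. Legendre (t^3 - t) p"] f L0 Lsq0 unfolding T_def by simp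
  also have "\<dots> = (\<Sum>t\<in>T. 4 * (if Legendre t p = 1 \<and> Legendre (t^2 - 1) p = 1 then 1 else 0)
        - Legendre t p - Legendre (t^2 - 1) p - 1)"
    by (rule sum.cong) (use ident in auto)
  also have "\<dots> = 4 * int (card X) + 2 + 2 - (p - 3)"
    using sumI sT1 sT2 cT by (simp add: sum.distrib sum_subtractf sum_distrib_left[symmetric])
  finally show ?thesis using cardX by simp
qed

end



theorem lemma3:
  fixes p d :: int
  assumes "prime p" and "p > 2" and "d > 0" and "\<not> [d = 0] (mod p)"
    and "(-1) mod p \<in> QR p"
  shows "(d mod p \<in> QR p \<longrightarrow> int (Np p d) = 8 * int (n1 p) + 7)
       \<and> (d mod p \<in> QNR p \<longrightarrow> int (Np p d) = -8 * int (n1 p) + 2 * p - 7)"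
proof -
  note pp = assms(1) and p2 = assms(2) and d0 = assms(4) and m1 = assms(5)
  note Lc = L_cong[OF pp p2] and Lm = L_mult[OF pp p2] and fb = fib[OF pp p2] and LQ = L_QR[OF pp p2]
  define P where "P = {0..p-1}"
  have n1U: "n1 p = card (U p)" by (rule n1U[OF pp p2 m1])
  have S1': "(\<Sum>t\<in>P. Legendre (t^3 - t) p) = 8 * int (n1 p) + 7 - p"
    using S1[OF pp p2 m1] n1U unfolding P_def by simp
  have "{(x, y). x \<in> {0..p-1} \<and> y \<in> {0..p-1} \<and> [y^2 = x^3 - d^2 * x] (mod p)}
      = (SIGMA x:P. {y\<in>P. [y^2 = x^3 - d^2 * x] (mod p)})" unfolding P_def by auto
  then have "card {(x, y). x \<in> {0..p-1} \<and> y \<in> {0..p-1} \<and> [y^2 = x^3 - d^2 * x] (mod p)}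
      = (\<Sum>x\<in>P. card {y\<in>P. [y^2 = x^3 - d^2 * x] (mod p)})"
    by (simp only:) (rule card_SigmaI, auto simp: P_def intro: finite_subset[of _ "{0..p-1}"])
  then have "int (Np p d) = (\<Sum>x\<in>P. 1 + Legendre (x^3 - d^2 * x) p)"
    unfolding Np_def P_def using fb by (simp only: of_nat_sum)
  also have "\<dots> = p + (\<Sum>x\<in>P. Legendre (x^3 - d^2 * x) p)"
    using p2 by (simp add: sum.distrib P_def)
  finally have N1: "int (Np p d) = p + (\<Sum>x\<in>P. Legendre (x^3 - d^2 * x) p)" .
  define h where "h = (\<lambda>t. (d * t) mod p)"
  have copd: "coprime d p"
  proof -
    have "\<not> p dvd d" using d0 by (simp add: cong_0_iff)
    then show ?thesis using prime_imp_coprime[OF pp] coprime_commute by blast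
  qed
  have inj: "inj_on h P"
  proof (rule inj_onI)
    fix a b assume a: "a \<in> P" and b: "b \<in> P" and e: "h a = h b"
    then have "[a * d = b * d] (mod p)" unfolding h_def by (simp add: cong_def mult.commute)
    then have "[a = b] (mod p)" using cong_mult_rcancel copd by blast
    then show "a = b" using a b unfolding P_def by (simp add: cong_def)
  qed
  have himg: "h ` P = P"
  proof (rule card_subset_eq)
    show "finite P" unfolding P_def by simp
    show "h ` P \<subseteq> P" unfolding h_def P_def using p2 by auto
    show "card (h ` P) = card P" using card_image[OF inj] .
  qed
  have bij: "bij_betw h P P" using inj himg by (simp add: bij_betw_def)
  have Ld3: "Legendre (d^3) p = Legendre d p"
  proof -
    have "d^3 = d * (d * d)" by (simp add: power3_eq_cube)
    then have "Legendre (d^3) p = Legendre d p * (Legendre d p * Legendre d p)" using Lm by simp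
    moreover have "Legendre d p \<in> {-1,0,1}" by (rule L_vals[OF pp p2])
    ultimately show ?thesis by auto
  qed
  have hterm: "Legendre ((h t)^3 - d^2 * h t) p = Legendre d p * Legendre (t^3 - t) p" for t
  proof -
    have ht: "[h t = d * t] (mod p)" unfolding h_def by (simp add: cong_def)
    have "[(h t)^3 - d^2 * h t = (d * t)^3 - d^2 * (d * t)] (mod p)"
      using ht by (intro cong_diff cong_pow cong_mult cong_refl)
    moreover have "(d * t)^3 - d^2 * (d * t) = d^3 * (t^3 - t)"
      by (simp add: power2_eq_square power3_eq_cube algebra_simps)
    ultimately have "Legendre ((h t)^3 - d^2 * h t) p = Legendre (d^3 * (t^3 - t)) p"
      using Lc by simp
    then show ?thesis using Lm Ld3 by simp
  qed
  have "(\<Sum>x\<in>P. Legendre (x^3 - d^2 * x) p) = (\<Sum>t\<in>P. Legendre ((h t)^3 - d^2 * h t) p)"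
    using sum.reindex_bij_betw[OF bij, of "\<lambda>x. Legendre (x^3 - d^2 * x) p"] by simp
  also have "\<dots> = Legendre d p * (\<Sum>t\<in>P. Legendre (t^3 - t) p)"
    by (simp add: hterm sum_distrib_left)
  finally have N2: "int (Np p d) = p + Legendre d p * (8 * int (n1 p) + 7 - p)"
    using N1 S1' by simp
  show ?thesis
  proof (intro conjI impI)
    assume "d mod p \<in> QR p"
    then have "Legendre d p = 1" using LQ by blast
    then show "int (Np p d) = 8 * int (n1 p) + 7" using N2 by simp
  next
    assume "d mod p \<in> QNR p"
    then have "d mod p \<notin> QR p" unfolding QNR_def by auto
    then have "Legendre d p \<noteq> 1" using LQ by blast
    moreover have "Legendre d p \<noteq> 0" using d0 by (simp add: Legendre_def)
    moreover have "Legendre d p \<in> {-1,0,1}" by (rule L_vals[OF pp p2])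
    ultimately have "Legendre d p = -1" by auto
    then show "int (Np p d) = -8 * int (n1 p) + 2 * p - 7" using N2 by simp
  qed
qed


end
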